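(* Let $k\ge1$ be an integer and $0<\alpha<1$, and suppose there is a positive integer satisfying $\sum_{i=k}^{\infty}2^{-i-v}\binom{i+v-1}{i}\le\alpha$; let $v$ be the largest such integer. Under the hypotheses of the setting in the context, the knockoffs procedure with parameter $v$ controls the $k$-familywise error rate at level $\alpha$: $\Pr(V\ge k)\le\alpha$.
   Context: Setting: $p\ge1$; $W_1,\dots,W_p$ are real random variables, almost surely pairwise distinct; $\chi_1,\dots,\chi_p$ take values in $\{-1,0,1\}$; $\mathcal H_0\subseteq\{1,\dots,p\}$ is the set of true nulls, and conditional on $(W_1,\dots,W_p)$ and $(\chi_j)_{j\notin\mathcal H_0}$, the variables $(\chi_j)_{j\in\mathcal H_0}$ are jointly independent and uniform on $\{-1,+1\}$. Knockoffs procedure with parameter $v$: let $\rho$ be the permutation with $W_{\rho(1)}>\cdots>W_{\rho(p)}$; let $j^\star$ be the position of the $v$-th $-1$ in $\chi_{\rho(1)},\dots,\chi_{\rho(p)}$ ($j^\star=p$ if fewer than $v$ entries equal $-1$); reject $\rho(j)$ for all $j\le j^\star$ with $\chi_{\rho(j)}=+1$. $V=\#\{j\in\mathcal H_0: j\text{ rejected}\}$. (This setting arises in linear regression $y=X\beta+z$, $n\ge p$, full-rank $X$, Gaussian noise, with Lasso-based knockoff statistics $W_j=\max\{Z_j,\tilde Z_j\}$, $\chi_j=\mathrm{sgn}(Z_j-\tilde Z_j)$ and $\mathcal H_0=\{j:\beta_j=0\}$.) *)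

theory Defs
  imports "HOL-Probability.Probability"
begin

text \<open>Deterministic description of the knockoffs procedure. Variables are indexed by
  1..p; w gives the statistics W_j, x gives the signs chi_j.\<close>

text \<open>The ordering rho(1),...,rho(p) with decreasing W (as a 0-based list).\<close>
definition knockoff_order :: "nat \<Rightarrow> (nat \<Rightarrow> real) \<Rightarrow> nat list" where
  "knockoff_order p w = sort_key (\<lambda>j. - w j) [1..<Suc p]"

text \<open>j-star: the (1-based) position of the v-th -1 in chi_rho(1),...,chi_rho(p), or p
  if there are fewer than v entries equal to -1.\<close>
definition knockoff_jstar :: "nat \<Rightarrow> (nat \<Rightarrow> real) \<Rightarrow> (nat \<Rightarrow> int) \<Rightarrow> nat \<Rightarrow> nat" where
  "knockoff_jstar p w x v =
     (let rs = knockoff_order p w;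
          negs = filter (\<lambda>i. x (rs ! i) = -1) [0..<p]
      in if length negs < v then p else negs ! (v - 1) + 1)"

definition knockoff_rejections ::
  "nat \<Rightarrow> (nat \<Rightarrow> real) \<Rightarrow> (nat \<Rightarrow> int) \<Rightarrow> nat \<Rightarrow> nat set" where
  "knockoff_rejections p w x v =
     {knockoff_order p w ! i | i. i < knockoff_jstar p w x v \<and> x (knockoff_order p w ! i) = 1}"

text \<open>The series sum_{i \<ge> k} 2^{-i-v} binom(i+v-1, i), reindexed i = n + k.\<close>
definition knockoff_tail :: "nat \<Rightarrow> nat \<Rightarrow> real" where
  "knockoff_tail k v = (\<Sum>n. (1/2) ^ (n + k + v) * real ((n + k + v - 1) choose (n + k)))"

end

theory Submission imports Defs begin
lemma le_set_meas:
  assumes "i \<in> I" "j \<in> I"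
  shows "{w \<in> space (PiM I (\<lambda>_. borel)). (w j \<le> (w i::real)) = b} \<in> sets (PiM I (\<lambda>_. borel))"
proof -
  have f: "(\<lambda>w. w j) \<in> borel_measurable (PiM I (\<lambda>_. borel::real measure))"
    by (rule measurable_component_singleton[OF assms(2)])
  have g: "(\<lambda>w. w i) \<in> borel_measurable (PiM I (\<lambda>_. borel::real measure))"
    by (rule measurable_component_singleton[OF assms(1)])
  have le: "{w \<in> space (PiM I (\<lambda>_. borel)). w j \<le> (w i::real)} \<in> sets (PiM I (\<lambda>_. borel))"
    by (rule borel_measurable_le[OF f g])
  show ?thesis
  proof (cases b)
    case True then show ?thesis using le by simp
  next
    case False
    have "{w \<in> space (PiM I (\<lambda>_. borel)). (w j \<le> (w i::real)) = b} =
          space (PiM I (\<lambda>_. borel)) - {w \<in> space (PiM I (\<lambda>_. borel)). w j \<le> (w i::real)}"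
      using False by auto
    then show ?thesis using le by auto
  qed
qed
lemma order_props:
  "length (knockoff_order p w) = p" "distinct (knockoff_order p w)"
  "set (knockoff_order p w) = {1..p}"
  by (auto simp: knockoff_order_def distinct_sort)

lemma keyA:
  fixes w :: "nat \<Rightarrow> real" and x :: "nat \<Rightarrow> int"
  assumes "i < knockoff_jstar p w x v" "x (knockoff_order p w ! i) = 1" "v \<ge> 1"
  shows "card {i'. i' < i \<and> x (knockoff_order p w ! i') = -1} \<le> v - 1"
    and "knockoff_jstar p w x v \<le> p"
proof -
  define rs where "rs = knockoff_order p w"
  define negs where "negs = filter (\<lambda>i. x (rs!i) = -1) [0..<p]"
  have J: "knockoff_jstar p w x v = (if length negs < v then p else negs!(v-1)+1)"
    by (simp add: knockoff_jstar_def rs_def negs_def Let_def)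
  have sn: "sorted_wrt (<) negs" unfolding negs_def by (intro sorted_wrt_filter) simp
  show Jp: "knockoff_jstar p w x v \<le> p"
  proof (cases "length negs < v")
    case False
    hence "negs!(v-1) \<in> set negs" using assms(3) by simp
    hence "negs!(v-1) < p" unfolding negs_def by simp
    then show ?thesis using J False by simp
  qed (simp add: J)
  let ?M = "{i'. i' < i \<and> x (rs ! i') = -1}"
  show "card {i'. i' < i \<and> x (knockoff_order p w ! i') = -1} \<le> v - 1"
  proof -
  have "card ?M \<le> v - 1"
  proof (cases "length negs < v")
    case True
    have ip: "i < p" using assms(1) Jp by simp
    have "?M \<subseteq> set negs" using ip by (auto simp: negs_def)
    hence "card ?M \<le> card (set negs)" by (intro card_mono) auto
    also have "\<dots> \<le> length negs" by (rule card_length)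
    finally show ?thesis using True by simp
  next
    case False
    define z where "z = negs!(v-1)"
    have zin: "z \<in> set negs" using False assms(3) by (simp add: z_def)
    hence zx: "x (rs!z) = -1" and zp: "z < p" by (auto simp: negs_def)
    have "i \<le> z" using assms(1) J False by (simp add: z_def)
    moreover have "i \<noteq> z" using zx assms(2) rs_def by auto
    ultimately have iz: "i < z" by simp
    have "?M \<subseteq> (\<lambda>t. negs!t) ` {..<v-1}"
    proof
      fix i' assume "i' \<in> ?M"
      hence i': "i' < i" "x (rs!i') = -1" by auto
      hence "i' \<in> set negs" using iz zp by (auto simp: negs_def)
      then obtain t where t: "t < length negs" "negs!t = i'" by (auto simp: in_set_conv_nth)
      have "t < v - 1"
      proof (rule ccontr)
        assume "\<not> t < v - 1"
        hence "t = v - 1 \<or> v - 1 < t" by auto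
        then show False
        proof
          assume "t = v - 1" then show False using t i' iz z_def by simp
        next
          assume "v - 1 < t"
          from sorted_wrt_nth_less[OF sn this t(1)] show False using t i' iz z_def by simp
        qed
      qed
      then show "i' \<in> (\<lambda>t. negs!t) ` {..<v-1}" using t by auto
    qed
    hence "card ?M \<le> card ((\<lambda>t. negs!t) ` {..<v-1})" by (intro card_mono) auto
    also have "\<dots> \<le> v - 1" using card_image_le[of "{..<v-1}" "\<lambda>t. negs!t"] by simp
    finally show ?thesis .
  qed
  then show ?thesis by (simp add: rs_def)
  qed
qed

definition Qset :: "nat \<Rightarrow> (nat \<Rightarrow> real) \<Rightarrow> nat set \<Rightarrow> nat \<Rightarrow> nat set" where
  "Qset p w H0 N = (\<lambda>i. knockoff_order p w ! i) `
      set (take N (sorted_list_of_set {i. i < p \<and> knockoff_order p w ! i \<in> H0}))"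

lemma Qset_props:
  "Qset p w H0 N \<subseteq> H0" "card (Qset p w H0 N) \<le> N"
proof -
  let ?L = "sorted_list_of_set {i. i < p \<and> knockoff_order p w ! i \<in> H0}"
  have "set ?L = {i. i < p \<and> knockoff_order p w ! i \<in> H0}" by simp
  then show "Qset p w H0 N \<subseteq> H0" unfolding Qset_def by (auto dest: in_set_takeD)
  have "card (Qset p w H0 N) \<le> card (set (take N ?L))" unfolding Qset_def by (rule card_image_le) simp
  also have "\<dots> \<le> length (take N ?L)" by (rule card_length)
  also have "\<dots> \<le> N" by simp
  finally show "card (Qset p w H0 N) \<le> N" .
qed

lemma det:
  fixes w :: "nat \<Rightarrow> real" and x :: "nat \<Rightarrow> int"
  assumes H0: "\<forall>j\<in>H0. x j \<in> {-1,1}" and k: "k \<ge> 1" and v: "v \<ge> 1"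
    and V: "k \<le> card (knockoff_rejections p w x v \<inter> H0)"
  shows "k \<le> card {j \<in> Qset p w H0 (k+v-1). x j = 1}"
proof -
  define rs where "rs = knockoff_order p w"
  define J where "J = knockoff_jstar p w x v"
  define N where "N = k + v - 1"
  have rsl: "length rs = p" "distinct rs" using order_props rs_def by auto
  define RP where "RP = {i. i < J \<and> x (rs!i) = 1 \<and> rs!i \<in> H0}"
  have finRP: "finite RP" unfolding RP_def by (rule finite_subset[of _ "{..<J}"]) auto
  have "knockoff_rejections p w x v \<inter> H0 = (\<lambda>i. rs!i) ` RP"
    unfolding knockoff_rejections_def RP_def rs_def J_def by auto
  hence "k \<le> card ((\<lambda>i. rs!i) ` RP)" using V by simp
  also have "\<dots> \<le> card RP" using finRP by (rule card_image_le)
  finally have kRP: "k \<le> card RP" .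
  hence "RP \<noteq> {}" using k by auto
  define i0 where "i0 = Max RP"
  have i0: "i0 \<in> RP" "\<And>i. i \<in> RP \<Longrightarrow> i \<le> i0"
    using finRP \<open>RP \<noteq> {}\<close> by (auto simp: i0_def)
  have Jp: "J \<le> p" using keyA(2)[of i0 p w x v] i0 v by (auto simp: RP_def J_def rs_def)
  have A: "card {i'. i' < i0 \<and> x (rs ! i') = -1} \<le> v - 1"
    using keyA(1)[of i0 p w x v] i0 v by (auto simp: RP_def J_def rs_def)
  define NP where "NP = {i. i < p \<and> rs ! i \<in> H0}"
  define L where "L = sorted_list_of_set NP"
  define Qp where "Qp = set (take N L)"
  have finNP: "finite NP" unfolding NP_def by simp
  have setL: "set L = NP" and sL: "sorted_wrt (<) L" and dL: "distinct L"
    using finNP by (auto simp: L_def)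
  have QpNP: "Qp \<subseteq> NP" using setL by (auto simp: Qp_def dest: in_set_takeD)
  define Qplus where "Qplus = {i\<in>Qp. x (rs!i) = 1}"
  have "k \<le> card Qplus"
  proof (cases "{i\<in>NP. i \<le> i0} \<subseteq> Qp")
    case True
    have "RP \<subseteq> Qplus"
    proof
      fix i assume i: "i \<in> RP"
      hence "i \<in> NP" "i \<le> i0" using i0 Jp by (auto simp: RP_def NP_def)
      then show "i \<in> Qplus" using True i by (auto simp: Qplus_def RP_def)
    qed
    moreover have "finite Qplus" by (simp add: Qplus_def Qp_def)
    ultimately show ?thesis using kRP card_mono by (metis le_trans)
  next
    case False
    then obtain i1 where i1: "i1 \<in> NP" "i1 \<le> i0" "i1 \<notin> Qp" by auto
    then obtain j where j: "j < length L" "L!j = i1" using setL by (auto simp: in_set_conv_nth)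
    have jN: "N \<le> j"
    proof (rule ccontr)
      assume "\<not> N \<le> j"
      hence "take N L ! j = L ! j" "j < length (take N L)" using j by auto
      hence "i1 \<in> Qp" unfolding Qp_def using j by (metis nth_mem)
      with i1 show False by simp
    qed
    have cQp: "card Qp = N" unfolding Qp_def using dL j jN
      by (subst distinct_card) auto
    have Qlt: "\<And>y. y \<in> Qp \<Longrightarrow> y < i0"
    proof -
      fix y assume "y \<in> Qp"
      then obtain t where t: "t < length (take N L)" "take N L ! t = y"
        unfolding Qp_def by (auto simp: in_set_conv_nth)
      hence "t < j" "L!t = y" using jN by auto
      from sorted_wrt_nth_less[OF sL this(1) j(1)] show "y < i0" using j i1 \<open>L!t = y\<close> by simp
    qed
    define Qminus where "Qminus = {i\<in>Qp. x (rs!i) = -1}"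
    have "Qminus \<subseteq> {i'. i' < i0 \<and> x (rs ! i') = -1}" using Qlt by (auto simp: Qminus_def)
    hence "card Qminus \<le> card {i'. i' < i0 \<and> x (rs ! i') = -1}"
      by (rule card_mono[rotated]) (rule finite_subset[of _ "{..<i0}"], auto)
    hence "card Qminus \<le> v - 1" using A by linarith
    have "Qp \<subseteq> Qplus \<union> Qminus"
    proof
      fix y assume y: "y \<in> Qp"
      hence "rs!y \<in> H0" using QpNP by (auto simp: NP_def)
      hence "x (rs!y) \<in> {-1,1}" using H0 by auto
      then show "y \<in> Qplus \<union> Qminus" using y by (auto simp: Qplus_def Qminus_def)
    qed
    hence "card Qp \<le> card (Qplus \<union> Qminus)" by (intro card_mono) (auto simp: Qplus_def Qminus_def Qp_def)
    also have "\<dots> \<le> card Qplus + card Qminus" by (rule card_Un_le)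
    finally show ?thesis using cQp \<open>card Qminus \<le> v - 1\<close> N_def v by linarith
  qed
  also have "card Qplus = card ((\<lambda>i. rs!i) ` Qplus)"
  proof (rule card_image[symmetric], rule inj_on_nth)
    show "distinct rs" by (rule rsl)
    show "\<forall>i\<in>Qplus. i < length rs" using QpNP rsl by (auto simp: Qplus_def NP_def)
  qed
  also have "\<dots> \<le> card {j \<in> Qset p w H0 (k+v-1). x j = 1}"
  proof (rule card_mono)
    show "finite {j \<in> Qset p w H0 (k+v-1). x j = 1}" by (simp add: Qset_def)
    show "(\<lambda>i. rs!i) ` Qplus \<subseteq> {j \<in> Qset p w H0 (k+v-1). x j = 1}"
      by (auto simp: Qplus_def Qset_def Qp_def L_def NP_def rs_def N_def)
  qed
  finally show ?thesis .
qed

lemma insort_cong: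
  "(\<forall>a\<in>insert x (set ys). \<forall>b\<in>insert x (set ys). (f a \<le> f b) = (g a \<le> g b)) \<Longrightarrow>
   insort_key f x ys = insort_key g x ys"
  by (induction ys) auto

lemma sort_cong:
  "(\<forall>a\<in>set xs. \<forall>b\<in>set xs. (f a \<le> f b) = (g a \<le> g b)) \<Longrightarrow> sort_key f xs = sort_key g xs"
proof (induction xs)
  case Nil then show ?case by simp
next
  case (Cons x xs)
  hence "sort_key f xs = sort_key g xs" by simp
  then show ?case using Cons.prems by (simp, intro insort_cong) simp
qed

definition cmp :: "nat \<Rightarrow> (nat \<Rightarrow> real) \<Rightarrow> (nat \<times> nat) set" where
  "cmp p w = {(i,j). i \<in> {1..p} \<and> j \<in> {1..p} \<and> w j \<le> w i}"

lemma order_cmp: "cmp p w = cmp p w' \<Longrightarrow> knockoff_order p w = knockoff_order p w'"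
  unfolding knockoff_order_def
proof (rule sort_cong, intro ballI)
  fix a b assume "cmp p w = cmp p w'" "a \<in> set [1..<Suc p]" "b \<in> set [1..<Suc p]"
  then have "((a,b) \<in> cmp p w) = ((a,b) \<in> cmp p w')" by simp
  then show "(- w a \<le> - w b) = (- w' a \<le> - w' b)" using \<open>a \<in> _\<close> \<open>b \<in> _\<close> by (auto simp: cmp_def)
qed

lemma cmp_restrict: "cmp p (\<lambda>j\<in>{1..p}. w j) = cmp p w"
  by (auto simp: cmp_def)

lemma rej_cong:
  assumes "knockoff_order p w = knockoff_order p w'" "\<forall>j\<in>{1..p}. x j = x' j" "v \<ge> 1"
  shows "knockoff_rejections p w x v = knockoff_rejections p w' x' v"
proof -
  define rs where "rs = knockoff_order p w"
  have rs': "knockoff_order p w' = rs" using assms rs_def by simp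
  have inr: "\<And>i. i < p \<Longrightarrow> rs ! i \<in> {1..p}" using order_props[of p w] rs_def
    by (metis nth_mem)
  have "filter (\<lambda>i. x (rs!i) = -1) [0..<p] = filter (\<lambda>i. x' (rs!i) = -1) [0..<p]"
    by (rule filter_cong) (use inr assms(2) in auto)
  hence J: "knockoff_jstar p w x v = knockoff_jstar p w' x' v"
    unfolding knockoff_jstar_def Let_def rs' rs_def[symmetric] by simp
  have Jp: "knockoff_jstar p w x v \<le> p"
  proof (cases "length (filter (\<lambda>i. x (rs!i) = -1) [0..<p]) < v")
    case False
    have "v \<ge> 1" by (rule assms(3))
    hence "filter (\<lambda>i. x (rs!i) = -1) [0..<p] ! (v-1) \<in> set (filter (\<lambda>i. x (rs!i) = -1) [0..<p])"
      using False by (intro nth_mem) simp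
    then show ?thesis using False unfolding knockoff_jstar_def Let_def rs_def[symmetric]
      by (simp del: set_filter) (simp only: set_filter, simp)
  qed (simp add: knockoff_jstar_def Let_def rs_def)
  show ?thesis
    unfolding knockoff_rejections_def rs' rs_def[symmetric] J[symmetric]
    using Jp inr assms(2) by (auto; metis order.strict_trans2)
qed
lemma negbin_sums:
  "(\<lambda>i. (1/2::real) ^ (i + Suc u) * real ((i + Suc u - 1) choose i)) sums 1"
proof -
  have "(\<lambda>n. ((- real (Suc u)) gchoose n) * (-1/2::real)^n) sums (1 + (-1/2)) powr (- real (Suc u))"
    by (rule gen_binomial_real) simp
  moreover have "((- real (Suc u)) gchoose n) * (-1/2::real)^n = real ((n + u) choose n) * (1/2)^n" for n
  proof -
    have "((- real (Suc u)) gchoose n) = (-1)^n * ((real n + real (Suc u) - 1) gchoose n)"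
      by (subst gbinomial_negated_upper) simp
    also have "real n + real (Suc u) - 1 = real (n + u)" by simp
    also have "(real (n+u) gchoose n) = real ((n+u) choose n)" by (simp add: binomial_gbinomial)
    finally show ?thesis by (simp add: power_mult_distrib[symmetric])
  qed
  moreover have "(1 + (-1/2::real)) powr (- real (Suc u)) = 2 ^ Suc u"
  proof -
    have "(1 + (-1/2::real)) powr (- real (Suc u)) = inverse ((1/2) powr real (Suc u))"
      using powr_minus[of "1/2::real" "real (Suc u)"] by (simp only: add_diff_cancel_left' one_add_one[symmetric]) simp
    also have "(1/2::real) powr real (Suc u) = (1/2) ^ Suc u" by (rule powr_realpow) simp
    finally show ?thesis by (simp add: power_one_over)
  qed
  ultimately have "(\<lambda>n. real ((n + u) choose n) * (1/2)^n) sums (2 ^ Suc u)" by simp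
  from sums_mult[OF this, of "(1/2)^Suc u"]
  show ?thesis by (simp add: power_add mult_ac power_one_over)
qed


lemma pascal_sum: "(\<Sum>i<Suc k. (Suc n) choose i) = 2 * (\<Sum>i<k. n choose i) + (n choose k)"
  by (induction k) simp_all

lemma fin_ident:
  "(\<Sum>i<k. real ((i+u) choose i) / 2^(i+u+1)) = (\<Sum>i<k. real ((k+u) choose i)) / 2^(k+u)"
proof (induction k)
  case 0 then show ?case by simp
next
  case (Suc k)
  have "(\<Sum>i<Suc k. real ((Suc k+u) choose i)) = 2 * (\<Sum>i<k. real ((k+u) choose i)) + real ((k+u) choose k)"
    using pascal_sum[where k=k and n="k+u"] by (simp del: sum.lessThan_Suc flip: of_nat_sum)
  then show ?case using Suc by (simp add: field_simps)
qed

lemma mono_step: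
  "(\<Sum>i<k. real (Suc n choose i)) / 2^(Suc n) \<le> (\<Sum>i<k. real (n choose i)) / 2^n"
proof (cases k)
  case 0 then show ?thesis by simp
next
  case (Suc k')
  have "(\<Sum>i<k. real (Suc n choose i)) = 2 * (\<Sum>i<k'. real (n choose i)) + real (n choose k')"
    using pascal_sum[where k=k' and n=n] Suc by (simp del: sum.lessThan_Suc flip: of_nat_sum)
  also have "\<dots> \<le> 2 * (\<Sum>i<k. real (n choose i))" using Suc by simp
  finally show ?thesis by (simp add: field_simps)
qed

lemma mono_tail:
  assumes "q \<le> N"
  shows "(\<Sum>i<k. real (N choose i)) / 2^N \<le> (\<Sum>i<k. real (q choose i)) / 2^q"
  using assms
proof (induction N rule: dec_induct)
  case base then show ?case by simp
next
  case (step n) then show ?case using mono_step[where k=k and n=n] by linarith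
qed

lemma count_pow:
  assumes "finite Q"
  shows "real (card {T. T \<subseteq> Q \<and> k \<le> card T}) = 2 ^ card Q - (\<Sum>i<k. real (card Q choose i))"
proof -
  have fin: "finite {T. T \<subseteq> Q \<and> P T}" for P using assms by simp
  have "{T. T \<subseteq> Q \<and> card T < k} = (\<Union>i\<in>{..<k}. {T. T \<subseteq> Q \<and> card T = i})" by auto
  hence c1: "card {T. T \<subseteq> Q \<and> card T < k} = (\<Sum>i<k. card Q choose i)"
    using assms by (simp, subst card_UN_disjoint) (auto simp: n_subsets)
  have "Pow Q = {T. T \<subseteq> Q \<and> k \<le> card T} \<union> {T. T \<subseteq> Q \<and> card T < k}" by auto
  hence "card (Pow Q) = card {T. T \<subseteq> Q \<and> k \<le> card T} + card {T. T \<subseteq> Q \<and> card T < k}"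
    using fin by (simp add: card_Un_disjoint disjoint_iff)
  with c1 assms have "2 ^ card Q = card {T. T \<subseteq> Q \<and> k \<le> card T} + (\<Sum>i<k. card Q choose i)"
    by (simp add: card_Pow)
  hence "real (2 ^ card Q) = real (card {T. T \<subseteq> Q \<and> k \<le> card T}) + real (\<Sum>i<k. card Q choose i)"
    by (metis of_nat_add)
  then show ?thesis by simp
qed

lemma count_fun:
  assumes "finite H" "Q \<subseteq> H"
  shows "card {s \<in> PiE H (\<lambda>_. {-1,1::int}). k \<le> card {j\<in>Q. s j = 1}}
       = card {T. T \<subseteq> Q \<and> k \<le> card T} * 2 ^ (card H - card Q)"
proof -
  let ?A = "{s \<in> PiE H (\<lambda>_. {-1,1::int}). k \<le> card {j\<in>Q. s j = 1}}"
  let ?B = "{T. T \<subseteq> Q \<and> k \<le> card T} \<times> Pow (H - Q)"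
  let ?f = "\<lambda>s. ({j\<in>Q. s j = (1::int)}, {j\<in>H-Q. s j = 1})"
  let ?g = "\<lambda>(T,U). (\<lambda>j\<in>H. if j \<in> T \<union> U then 1 else (-1::int))"
  have "bij_betw ?f ?A ?B"
  proof (rule bij_betw_byWitness[where f'="?g"])
    show "\<forall>a\<in>?A. ?g (?f a) = a"
    proof
      fix s assume s: "s \<in> ?A"
      show "?g (?f s) = s"
      proof (rule ext)
        fix j show "?g (?f s) j = s j"
          using s assms(2) by (cases "j \<in> H") (force simp: PiE_def extensional_def Pi_def)+
      qed
    qed
    show "\<forall>a'\<in>?B. ?f (?g a') = a'" using assms(2) by auto
    show "?f ` ?A \<subseteq> ?B" by auto
    show "?g ` ?B \<subseteq> ?A"
    proof
      fix s assume "s \<in> ?g ` ?B"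
      then obtain T U where TU: "T \<subseteq> Q" "k \<le> card T" "U \<subseteq> H - Q" and s: "s = ?g (T,U)" by auto
      have "{j\<in>Q. s j = 1} = T" using TU assms(2) s by auto
      then show "s \<in> ?A" using TU s by auto
    qed
  qed
  hence "card ?A = card ?B" by (rule bij_betw_same_card)
  also have "\<dots> = card {T. T \<subseteq> Q \<and> k \<le> card T} * 2 ^ (card H - card Q)"
    using assms by (simp add: card_cartesian_product card_Pow card_Diff_subset finite_subset)
  finally show ?thesis .
qed

lemma tail_eq: "knockoff_tail k (Suc u) = 1 - (\<Sum>i<k. real ((k+u) choose i)) / 2^(k+u)"
proof -
  let ?g = "\<lambda>i. (1/2::real) ^ (i + Suc u) * real ((i + Suc u - 1) choose i)"
  have "(\<lambda>n. ?g (n + k)) sums (1 - (\<Sum>i<k. ?g i))"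
  proof (subst sums_iff_shift)
    show "?g sums (1 - (\<Sum>i<k. ?g i) + (\<Sum>i<k. ?g i))"
      unfolding diff_add_cancel by (rule negbin_sums)
  qed
  hence "knockoff_tail k (Suc u) = 1 - (\<Sum>i<k. ?g i)"
    unfolding knockoff_tail_def by (simp add: sums_iff add.assoc)
  also have "(\<Sum>i<k. ?g i) = (\<Sum>i<k. real ((i+u) choose i) / 2^(i+u+1))"
    by (simp add: power_one_over)
  also have "\<dots> = (\<Sum>i<k. real ((k+u) choose i)) / 2^(k+u)" by (rule fin_ident)
  finally show ?thesis .
qed

lemma count_final:
  assumes "finite H" "Q \<subseteq> H" "card Q \<le> k + u"
  shows "real (card {s \<in> PiE H (\<lambda>_. {-1,1::int}). k \<le> card {j\<in>Q. s j = 1}})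
          \<le> knockoff_tail k (Suc u) * 2 ^ card H"
proof -
  have fQ: "finite Q" using assms finite_subset by blast
  have qm: "card Q \<le> card H" using assms card_mono by blast
  have "real (card {s \<in> PiE H (\<lambda>_. {-1,1::int}). k \<le> card {j\<in>Q. s j = 1}})
      = (2 ^ card Q - (\<Sum>i<k. real (card Q choose i))) * 2 ^ (card H - card Q)"
    using count_fun[OF assms(1,2), of k] count_pow[OF fQ, of k] by simp
  also have "\<dots> = (1 - (\<Sum>i<k. real (card Q choose i)) / 2 ^ card Q) * 2 ^ card H"
    using qm by (simp add: field_simps flip: power_add)
  also have "\<dots> \<le> (1 - (\<Sum>i<k. real ((k+u) choose i)) / 2^(k+u)) * 2 ^ card H"
    using mono_tail[OF assms(3), of k] by simp
  also have "\<dots> = knockoff_tail k (Suc u) * 2 ^ card H" by (simp add: tail_eq)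
  finally show ?thesis .
qed

theorem theorem1:
  fixes M :: "'a measure"
    and p k v :: nat and \<alpha> :: real
    and W :: "nat \<Rightarrow> 'a \<Rightarrow> real" and chi :: "nat \<Rightarrow> 'a \<Rightarrow> int"
    and H0 :: "nat set"
  assumes "prob_space M"
    and "p \<ge> 1" and "k \<ge> 1" and "0 < \<alpha>" and "\<alpha> < 1"
    and "v > 0" and "knockoff_tail k v \<le> \<alpha>"
    and "\<forall>u. u > 0 \<and> knockoff_tail k u \<le> \<alpha> \<longrightarrow> u \<le> v"
    and "\<forall>j\<in>{1..p}. W j \<in> borel_measurable M"
    and "\<forall>j\<in>{1..p}. chi j \<in> measurable M (count_space UNIV)"
    and "\<forall>j\<in>{1..p}. \<forall>\<omega>\<in>space M. chi j \<omega> \<in> {-1, 0, 1}"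
    and "AE \<omega> in M. inj_on (\<lambda>j. W j \<omega>) {1..p}"
    and "H0 \<subseteq> {1..p}"
    and "\<forall>B \<in> sets (PiM {1..p} (\<lambda>_. borel)). \<forall>c :: nat \<Rightarrow> int. \<forall>s :: nat \<Rightarrow> int.
           (\<forall>j\<in>H0. s j \<in> {-1, 1}) \<longrightarrow>
           measure M {\<omega> \<in> space M. (\<lambda>j\<in>{1..p}. W j \<omega>) \<in> B
                        \<and> (\<forall>j\<in>{1..p} - H0. chi j \<omega> = c j) \<and> (\<forall>j\<in>H0. chi j \<omega> = s j)}
         = measure M {\<omega> \<in> space M. (\<lambda>j\<in>{1..p}. W j \<omega>) \<in> B
                        \<and> (\<forall>j\<in>{1..p} - H0. chi j \<omega> = c j)} / 2 ^ card H0"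
  shows "measure M {\<omega> \<in> space M.
           card (knockoff_rejections p (\<lambda>j. W j \<omega>) (\<lambda>j. chi j \<omega>) v \<inter> H0) \<ge> k} \<le> \<alpha>"
proof -
  interpret prob_space M by (rule assms(1))
  obtain u where vu: "v = Suc u" using assms(6) by (cases v) auto
  have v1: "v \<ge> 1" using assms(6) by simp
  have finH0: "finite H0" using assms(13) finite_subset by blast
  define Nm where "Nm = (PiM {1..p} (\<lambda>_. borel) :: (nat \<Rightarrow> real) measure)"
  define BR where "BR R = {w \<in> space Nm. cmp p w = R}" for R
  have BR_sets: "BR R \<in> sets Nm" if R: "R \<subseteq> {1..p} \<times> {1..p}" for R
  proof -
    have eq: "(cmp p w = R) = (\<forall>ij\<in>{1..p} \<times> {1..p}. (w (snd ij) \<le> w (fst ij)) = (ij \<in> R))" for w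
      using R by (auto simp: cmp_def)
    have "BR R = {w \<in> space Nm. \<forall>ij\<in>{1..p} \<times> {1..p}. (w (snd ij) \<le> w (fst ij)) = (ij \<in> R)}"
      unfolding BR_def eq ..
    also have "\<dots> \<in> sets Nm"
      by (rule sets.sets_Collect_finite_All) (auto simp: Nm_def intro!: le_set_meas)
    finally show ?thesis .
  qed
  define C where "C = PiE ({1..p} - H0) (\<lambda>_. {-1,0,1::int})"
  define S where "S = PiE H0 (\<lambda>_. {-1,1::int})"
  define IX where "IX = Pow ({1..p} \<times> {1..p}) \<times> C"
  have finIX: "finite IX" unfolding IX_def C_def by (intro finite_cartesian_product finite_PiE) auto
  have finS: "finite S" unfolding S_def using finH0 by (intro finite_PiE) auto
  define Wr where "Wr \<omega> = (\<lambda>j\<in>{1..p}. W j \<omega>)" for \<omega>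
  define A where "A Rc = {\<omega> \<in> space M. Wr \<omega> \<in> BR (fst Rc) \<and> (\<forall>j\<in>{1..p} - H0. chi j \<omega> = snd Rc j)}" for Rc
  define As where "As Rc s = {\<omega> \<in> space M. Wr \<omega> \<in> BR (fst Rc) \<and> (\<forall>j\<in>{1..p} - H0. chi j \<omega> = snd Rc j)
      \<and> (\<forall>j\<in>H0. chi j \<omega> = s j)}" for Rc s
  have hyp: "measure M (As Rc s) = measure M (A Rc) / 2 ^ card H0" if "Rc \<in> IX" "s \<in> S" for Rc s
  proof -
    have "BR (fst Rc) \<in> sets Nm" using that by (intro BR_sets) (auto simp: IX_def)
    moreover have "\<forall>j\<in>H0. s j \<in> {-1,1}" using that by (auto simp: S_def)
    ultimately show ?thesis
      using assms(14) unfolding As_def A_def Wr_def Nm_def by blast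
  qed
  have Wr_meas: "Wr \<in> measurable M Nm"
    unfolding Wr_def Nm_def by (rule measurable_restrict) (use assms(9) in auto)
  have chi_set: "{\<omega> \<in> space M. chi j \<omega> = a} \<in> sets M" if "j \<in> {1..p}" for j a
  proof -
    have "chi j -` {a} \<inter> space M \<in> sets M"
      using assms(10) that by (intro measurable_sets[of _ M "count_space UNIV"]) auto
    moreover have "chi j -` {a} \<inter> space M = {\<omega> \<in> space M. chi j \<omega> = a}" by auto
    ultimately show ?thesis by simp
  qed
  have W_set: "{\<omega> \<in> space M. Wr \<omega> \<in> BR R} \<in> sets M" if "R \<subseteq> {1..p} \<times> {1..p}" for R
  proof -
    have "Wr -` BR R \<inter> space M \<in> sets M" using Wr_meas BR_sets[OF that] by (rule measurable_sets)
    moreover have "Wr -` BR R \<inter> space M = {\<omega> \<in> space M. Wr \<omega> \<in> BR R}" by auto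
    ultimately show ?thesis by simp
  qed
  have c_set: "{\<omega> \<in> space M. \<forall>j\<in>{1..p} - H0. chi j \<omega> = c j} \<in> sets M" for c
    by (rule sets.sets_Collect_finite_All) (auto intro: chi_set)
  have s_set: "{\<omega> \<in> space M. \<forall>j\<in>H0. chi j \<omega> = s j} \<in> sets M" for s
  proof (rule sets.sets_Collect_finite_All)
    fix j assume "j \<in> H0"
    then have "j \<in> {1..p}" using assms(13) by blast
    then show "{\<omega> \<in> space M. chi j \<omega> = s j} \<in> sets M" by (rule chi_set)
  qed (rule finH0)
  have A_sets: "A Rc \<in> sets M" if "Rc \<in> IX" for Rc
  proof -
    have "A Rc = {\<omega> \<in> space M. Wr \<omega> \<in> BR (fst Rc)} \<inter> {\<omega> \<in> space M. \<forall>j\<in>{1..p} - H0. chi j \<omega> = snd Rc j}"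
      by (auto simp: A_def)
    then show ?thesis using W_set[of "fst Rc"] c_set that by (auto simp: IX_def)
  qed
  have As_sets: "As Rc s \<in> sets M" if "Rc \<in> IX" for Rc s
  proof -
    have "As Rc s = A Rc \<inter> {\<omega> \<in> space M. \<forall>j\<in>H0. chi j \<omega> = s j}"
      by (auto simp: A_def As_def)
    then show ?thesis using A_sets[OF that] s_set by auto
  qed
  define xs where "xs c s = (\<lambda>j. if j \<in> H0 then s j else c j)" for c s :: "nat \<Rightarrow> int"
  define G where "G Rc = {s \<in> S. \<exists>\<omega>\<in>A Rc.
      k \<le> card (knockoff_rejections p (\<lambda>j. W j \<omega>) (xs (snd Rc) s) v \<inter> H0)}" for Rc
  have tail_nonneg: "0 \<le> knockoff_tail k v * 2 ^ card H0"
    using count_final[OF finH0, of "{}" k u] vu by simp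
  have Gbound: "real (card (G Rc)) \<le> knockoff_tail k v * 2 ^ card H0" if "Rc \<in> IX" for Rc
  proof (cases "A Rc = {}")
    case True
    then show ?thesis using tail_nonneg by (simp add: G_def)
  next
    case False
    then obtain \<omega>0 where \<omega>0: "\<omega>0 \<in> A Rc" by auto
    define Q0 where "Q0 = Qset p (\<lambda>j. W j \<omega>0) H0 (k+v-1)"
    have Q0: "Q0 \<subseteq> H0" "card Q0 \<le> k + u" using Qset_props vu by (auto simp: Q0_def)
    have "G Rc \<subseteq> {s \<in> PiE H0 (\<lambda>_. {-1,1::int}). k \<le> card {j\<in>Q0. s j = 1}}"
    proof
      fix s assume s: "s \<in> G Rc"
      then obtain \<omega> where \<omega>: "\<omega> \<in> A Rc"
        and V: "k \<le> card (knockoff_rejections p (\<lambda>j. W j \<omega>) (xs (snd Rc) s) v \<inter> H0)"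
        by (auto simp: G_def)
      have sS: "s \<in> S" using s by (simp add: G_def)
      have "cmp p (Wr \<omega>) = cmp p (Wr \<omega>0)" using \<omega> \<omega>0 by (simp add: A_def BR_def)
      hence "cmp p (\<lambda>j. W j \<omega>) = cmp p (\<lambda>j. W j \<omega>0)" by (simp only: Wr_def cmp_restrict)
      hence ord: "knockoff_order p (\<lambda>j. W j \<omega>) = knockoff_order p (\<lambda>j. W j \<omega>0)" by (rule order_cmp)
      have "\<forall>j\<in>H0. xs (snd Rc) s j \<in> {-1,1}" using sS by (auto simp: xs_def S_def)
      from det[OF this assms(3) v1 V]
      have "k \<le> card {j \<in> Qset p (\<lambda>j. W j \<omega>) H0 (k+v-1). xs (snd Rc) s j = 1}" .
      also have "Qset p (\<lambda>j. W j \<omega>) H0 (k+v-1) = Q0" unfolding Q0_def Qset_def ord ..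
      also have "{j \<in> Q0. xs (snd Rc) s j = 1} = {j\<in>Q0. s j = 1}" using Q0 by (auto simp: xs_def)
      finally show "s \<in> {s \<in> PiE H0 (\<lambda>_. {-1,1::int}). k \<le> card {j\<in>Q0. s j = 1}}"
        using sS by (simp add: S_def)
    qed
    hence "card (G Rc) \<le> card {s \<in> PiE H0 (\<lambda>_. {-1,1::int}). k \<le> card {j\<in>Q0. s j = 1}}"
      by (rule card_mono[rotated]) (use finS in \<open>simp add: S_def\<close>)
    hence "real (card (G Rc)) \<le> real (card {s \<in> PiE H0 (\<lambda>_. {-1,1::int}). k \<le> card {j\<in>Q0. s j = 1}})"
      by simp
    also have "\<dots> \<le> knockoff_tail k (Suc u) * 2 ^ card H0" by (rule count_final[OF finH0 Q0])
    finally show ?thesis using vu by simp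
  qed
  define D where "D Rc = A Rc - (\<Union>s\<in>S - G Rc. As Rc s)" for Rc
  have Un_sets: "(\<Union>s\<in>S - G Rc. As Rc s) \<in> sets M" if "Rc \<in> IX" for Rc
    using finS As_sets[OF that] by (intro sets.finite_UN) auto
  have D_sets: "D Rc \<in> sets M" if "Rc \<in> IX" for Rc
    unfolding D_def using A_sets[OF that] Un_sets[OF that] by auto
  have cardS: "card S = 2 ^ card H0" unfolding S_def using finH0 by (simp add: card_PiE numeral_2_eq_2)
  have D_bound: "measure M (D Rc) \<le> \<alpha> * measure M (A Rc)" if Rc: "Rc \<in> IX" for Rc
  proof -
    have GS: "G Rc \<subseteq> S" by (auto simp: G_def)
    have disj: "disjoint_family_on (As Rc) (S - G Rc)"
      unfolding disjoint_family_on_def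
    proof (intro ballI impI)
      fix s s' assume ss: "s \<in> S - G Rc" "s' \<in> S - G Rc" "s \<noteq> s'"
      then obtain j where j: "j \<in> H0" "s j \<noteq> s' j"
        by (auto simp: S_def PiE_def extensional_def) (metis ext)
      then show "As Rc s \<inter> As Rc s' = {}" by (auto simp: As_def)
    qed
    have "measure M (\<Union>s\<in>S - G Rc. As Rc s) = (\<Sum>s\<in>S - G Rc. measure M (As Rc s))"
      using finS As_sets[OF Rc] disj by (intro finite_measure_finite_Union) auto
    also have "\<dots> = (\<Sum>s\<in>S - G Rc. measure M (A Rc) / 2 ^ card H0)"
      using hyp[OF Rc] by (intro sum.cong) auto
    also have "\<dots> = real (card (S - G Rc)) * (measure M (A Rc) / 2 ^ card H0)" by simp
    also have "real (card (S - G Rc)) = 2 ^ card H0 - real (card (G Rc))"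
    proof -
      have "card (G Rc) \<le> card S" using GS finS by (rule card_mono[rotated])
      hence "real (card S - card (G Rc)) = real (card S) - real (card (G Rc))" by (rule of_nat_diff)
      then show ?thesis using GS finS cardS by (simp add: card_Diff_subset finite_subset)
    qed
    finally have U: "measure M (\<Union>s\<in>S - G Rc. As Rc s)
        = measure M (A Rc) - real (card (G Rc)) * measure M (A Rc) / 2 ^ card H0"
      by (simp add: field_simps)
    have "measure M (D Rc) = measure M (A Rc) - measure M (\<Union>s\<in>S - G Rc. As Rc s)"
      unfolding D_def
      by (rule finite_measure_Diff[OF A_sets[OF Rc] Un_sets[OF Rc]]) (auto simp: As_def A_def)
    also have "\<dots> = real (card (G Rc)) / 2 ^ card H0 * measure M (A Rc)" using U by simp
    also have "\<dots> \<le> knockoff_tail k v * measure M (A Rc)"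
      using Gbound[OF Rc] by (intro mult_right_mono) (simp_all add: field_simps)
    also have "\<dots> \<le> \<alpha> * measure M (A Rc)"
      using assms(7) by (intro mult_right_mono) simp_all
    finally show ?thesis .
  qed
  let ?E = "{\<omega> \<in> space M. card (knockoff_rejections p (\<lambda>j. W j \<omega>) (\<lambda>j. chi j \<omega>) v \<inter> H0) \<ge> k}"
  have E_sub: "?E \<subseteq> (\<Union>Rc\<in>IX. D Rc)"
  proof
    fix \<omega> assume \<omega>: "\<omega> \<in> ?E"
    define R where "R = cmp p (Wr \<omega>)"
    define c where "c = restrict (\<lambda>j. chi j \<omega>) ({1..p} - H0)"
    have RcIX: "(R, c) \<in> IX"
      using \<omega> assms(11) by (auto simp: IX_def R_def cmp_def C_def c_def)
    have Wsp: "Wr \<omega> \<in> space Nm" by (auto simp: Wr_def Nm_def space_PiM)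
    have \<omega>A: "\<omega> \<in> A (R, c)" using \<omega> Wsp by (auto simp: A_def BR_def R_def c_def)
    have "\<omega> \<notin> As (R, c) s" if s: "s \<in> S - G (R, c)" for s
    proof
      assume \<omega>s: "\<omega> \<in> As (R, c) s"
      have "\<forall>j\<in>{1..p}. chi j \<omega> = xs c s j" using \<omega>s by (auto simp: As_def xs_def)
      hence "knockoff_rejections p (\<lambda>j. W j \<omega>) (\<lambda>j. chi j \<omega>) v
           = knockoff_rejections p (\<lambda>j. W j \<omega>) (xs c s) v"
        by (intro rej_cong[OF refl _ v1]) simp
      hence "s \<in> G (R, c)" using \<omega> \<omega>A s by (auto simp: G_def)
      with s show False by simp
    qed
    hence "\<omega> \<in> D (R, c)" using \<omega>A by (auto simp: D_def)
    then show "\<omega> \<in> (\<Union>Rc\<in>IX. D Rc)" using RcIX by auto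
  qed
  have disjA: "disjoint_family_on A IX"
    unfolding disjoint_family_on_def
  proof (intro ballI impI)
    fix Rc Rc' assume "Rc \<in> IX" "Rc' \<in> IX" "Rc \<noteq> Rc'"
    then obtain R c R' c' where eqs: "Rc = (R,c)" "Rc' = (R',c')" "c \<in> C" "c' \<in> C"
      "(R,c) \<noteq> (R',c')" by (cases Rc, cases Rc') (auto simp: IX_def)
    show "A Rc \<inter> A Rc' = {}"
    proof (rule ccontr)
      assume "A Rc \<inter> A Rc' \<noteq> {}"
      then obtain \<omega> where "\<omega> \<in> A (R,c)" "\<omega> \<in> A (R',c')" using eqs by auto
      hence RR: "R = R'" and cc: "\<forall>j\<in>{1..p} - H0. c j = c' j" by (auto simp: A_def BR_def)
      have "c = c'" using eqs(3,4) unfolding C_def by (rule PiE_ext) (use cc in auto)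
      with RR eqs(5) show False by simp
    qed
  qed
  have "measure M ?E \<le> measure M (\<Union>Rc\<in>IX. D Rc)"
    using E_sub D_sets finIX by (intro finite_measure_mono sets.finite_UN) auto
  also have "\<dots> \<le> (\<Sum>Rc\<in>IX. measure M (D Rc))"
    using D_sets finIX by (intro finite_measure_subadditive_finite) auto
  also have "\<dots> \<le> (\<Sum>Rc\<in>IX. \<alpha> * measure M (A Rc))"
    using D_bound by (intro sum_mono) auto
  also have "\<dots> = \<alpha> * measure M (\<Union>Rc\<in>IX. A Rc)"
    using finIX A_sets disjA by (simp add: sum_distrib_left[symmetric] finite_measure_finite_Union image_subset_iff)
  also have "\<dots> \<le> \<alpha> * 1"
    using assms(4) by (intro mult_left_mono) (simp_all add: prob_le_1)
  finally show ?thesis by simp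
qed

end
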